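(* Let $m\ge 2$ and let $\mathcal{R}_m^4$ be the rose graph with $N_m=3m+1$ nodes. For the maximal entropy random walk (MERW) on $\mathcal{R}_m^4$, the stationary probability of the hub node, of any internal node, and of any peripheral node are respectively $$\pi_{\mathrm H}^{\mathrm M}=\frac{m}{2m+2}=\frac{N_m-1}{2(N_m-1)+6},\qquad \pi_{\mathrm I}^{\mathrm M}=\frac{1}{4m}=\frac{3}{4(N_m-1)},\qquad \pi_{\mathrm P}^{\mathrm M}=\frac{1}{2m(m+1)}=\frac{9}{2(N_m+2)(N_m-1)}.$$
   Context: The rose graph $\mathcal{R}_m^4$ ($m\ge2$) is obtained by gluing $m$ cycles of length 4 at a single common node, the hub; it has $3m+1$ nodes. In each 4-cycle, the two neighbours of the hub are internal nodes and the node opposite the hub is the peripheral node. For a connected graph with adjacency matrix $\mathbf{A}=(a_{ij})$, let $\lambda_1$ be the largest eigenvalue of $\mathbf{A}$ and $\psi_1=(\psi_{11},\dots,\psi_{1N})$ the corresponding positive unit eigenvector. The MERW is the Markov chain on nodes with transition probabilities $p_{ij}=\frac{a_{ij}}{\lambda_1}\frac{\psi_{1j}}{\psi_{1i}}$; its stationary distribution is the probability vector $\pi$ with $\pi\mathbf{P}=\pi$. *)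

theory Defs
  imports Complex_Main
begin

text \<open>Rose graph R_m^4 on the node set {0..3m}: node 0 is the hub; for petal k < m
  the internal nodes are 3k+1 and 3k+2 and the peripheral node is 3k+3.
  The 4-cycle of petal k is 0 - 3k+1 - 3k+3 - 3k+2 - 0.\<close>

definition rose_nodes :: "nat \<Rightarrow> nat set" where
  "rose_nodes m = {0..3*m}"

definition rose_edge :: "nat \<Rightarrow> nat \<Rightarrow> nat \<Rightarrow> bool" where
  "rose_edge m i j \<longleftrightarrow> (\<exists>k<m.
      {i, j} = {0, 3*k+1} \<or> {i, j} = {0, 3*k+2} \<or>
      {i, j} = {3*k+1, 3*k+3} \<or> {i, j} = {3*k+2, 3*k+3})"

definition rose_adj :: "nat \<Rightarrow> nat \<Rightarrow> nat \<Rightarrow> real" where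
  "rose_adj m i j = (if rose_edge m i j then 1 else 0)"

definition rose_hub :: nat where "rose_hub = 0"

definition rose_internal :: "nat \<Rightarrow> nat \<Rightarrow> bool" where
  "rose_internal m i \<longleftrightarrow> (\<exists>k<m. i = 3*k+1 \<or> i = 3*k+2)"

definition rose_peripheral :: "nat \<Rightarrow> nat \<Rightarrow> bool" where
  "rose_peripheral m i \<longleftrightarrow> (\<exists>k<m. i = 3*k+3)"

text \<open>Eigenvalues of a real matrix indexed by a finite node set V
  (the adjacency matrix is symmetric, so all eigenvalues are real).\<close>

definition is_eigvec :: "'a set \<Rightarrow> ('a \<Rightarrow> 'a \<Rightarrow> real) \<Rightarrow> real \<Rightarrow> ('a \<Rightarrow> real) \<Rightarrow> bool" where
  "is_eigvec V A lam v \<longleftrightarrow> (\<exists>i\<in>V. v i \<noteq> 0) \<and>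
      (\<forall>i\<in>V. (\<Sum>j\<in>V. A i j * v j) = lam * v i)"

definition eigenvalues :: "'a set \<Rightarrow> ('a \<Rightarrow> 'a \<Rightarrow> real) \<Rightarrow> real set" where
  "eigenvalues V A = {lam. \<exists>v. is_eigvec V A lam v}"

definition merw_P :: "('a \<Rightarrow> 'a \<Rightarrow> real) \<Rightarrow> real \<Rightarrow> ('a \<Rightarrow> real) \<Rightarrow> 'a \<Rightarrow> 'a \<Rightarrow> real" where
  "merw_P A lam1 \<psi> i j = A i j / lam1 * (\<psi> j / \<psi> i)"

definition is_stationary :: "'a set \<Rightarrow> ('a \<Rightarrow> 'a \<Rightarrow> real) \<Rightarrow> ('a \<Rightarrow> real) \<Rightarrow> bool" where
  "is_stationary V P \<pi> \<longleftrightarrow> (\<forall>i\<in>V. \<pi> i \<ge> 0) \<and> (\<Sum>i\<in>V. \<pi> i) = 1 \<and>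
      (\<forall>j\<in>V. (\<Sum>i\<in>V. \<pi> i * P i j) = \<pi> j)"

end

theory Submission
  imports Defs
begin
lemma split_sum: "(\<Sum>j\<in>{0..3*m}. f j) = f 0 + (\<Sum>k<m. f(3*k+1)+f(3*k+2)+f(3*k+3)) " for f :: "nat \<Rightarrow> real"
proof (induction m)
  case 0 then show ?case by simp
next
  case (Suc m)
  have "{0..3*Suc m} = insert (3*m+3) (insert (3*m+2) (insert (3*m+1) {0..3*m}))" by auto
  then show ?case using Suc by (simp add: algebra_simps)
qed

lemma e00: "\<not> rose_edge m 0 0" unfolding rose_edge_def by (auto simp: doubleton_eq_iff; presburger)
lemma e01: "rose_edge m 0 (3*k+1) \<longleftrightarrow> k<m" unfolding rose_edge_def by (auto simp: doubleton_eq_iff; presburger)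
lemma e02: "rose_edge m 0 (3*k+2) \<longleftrightarrow> k<m" unfolding rose_edge_def by (auto simp: doubleton_eq_iff; presburger)
lemma e03: "\<not> rose_edge m 0 (3*k+3)" unfolding rose_edge_def by (auto simp: doubleton_eq_iff; presburger)
lemma e10: "rose_edge m (3*k+1) 0 \<longleftrightarrow> k<m" unfolding rose_edge_def by (auto simp: doubleton_eq_iff; presburger)
lemma e11: "\<not> rose_edge m (3*k+1) (3*k'+1)" unfolding rose_edge_def by (auto simp: doubleton_eq_iff; presburger)
lemma e12: "\<not> rose_edge m (3*k+1) (3*k'+2)" unfolding rose_edge_def by (auto simp: doubleton_eq_iff; presburger)
lemma e13: "rose_edge m (3*k+1) (3*k'+3) \<longleftrightarrow> k<m \<and> k'=k" unfolding rose_edge_def by (auto simp: doubleton_eq_iff; presburger)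
lemma e20: "rose_edge m (3*k+2) 0 \<longleftrightarrow> k<m" unfolding rose_edge_def by (auto simp: doubleton_eq_iff; presburger)
lemma e21: "\<not> rose_edge m (3*k+2) (3*k'+1)" unfolding rose_edge_def by (auto simp: doubleton_eq_iff; presburger)
lemma e22: "\<not> rose_edge m (3*k+2) (3*k'+2)" unfolding rose_edge_def by (auto simp: doubleton_eq_iff; presburger)
lemma e23: "rose_edge m (3*k+2) (3*k'+3) \<longleftrightarrow> k<m \<and> k'=k" unfolding rose_edge_def by (auto simp: doubleton_eq_iff; presburger)
lemma e30: "\<not> rose_edge m (3*k+3) 0" unfolding rose_edge_def by (auto simp: doubleton_eq_iff; presburger)
lemma e31: "rose_edge m (3*k+3) (3*k'+1) \<longleftrightarrow> k<m \<and> k'=k" unfolding rose_edge_def by (auto simp: doubleton_eq_iff; presburger)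
lemma e32: "rose_edge m (3*k+3) (3*k'+2) \<longleftrightarrow> k<m \<and> k'=k" unfolding rose_edge_def by (auto simp: doubleton_eq_iff; presburger)
lemma e33: "\<not> rose_edge m (3*k+3) (3*k'+3)" unfolding rose_edge_def by (auto simp: doubleton_eq_iff; presburger)
lemma esym: "rose_edge m i j = rose_edge m j i" unfolding rose_edge_def by (auto simp: insert_commute)
lemmas E = e00 e01 e02 e03 e10 e11 e12 e13 e20 e21 e22 e23 e30 e31 e32 e33

lemma R0: "(\<Sum>j\<in>{0..3*m}. rose_adj m 0 j * v j) = (\<Sum>k<m. v(3*k+1) + v(3*k+2))"
  unfolding split_sum rose_adj_def by (simp only: E if_True if_False) (simp add: sum.distrib if_distrib[where f="\<lambda>x. x * _"] sum.If_cases)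
lemma R1: "k<m \<Longrightarrow> (\<Sum>j\<in>{0..3*m}. rose_adj m (3*k+1) j * v j) = v 0 + v(3*k+3)"
  unfolding split_sum rose_adj_def by (simp only: E if_True if_False) (simp add: sum.distrib if_distrib[where f="\<lambda>x. x * _"] sum.If_cases)
lemma R2: "k<m \<Longrightarrow> (\<Sum>j\<in>{0..3*m}. rose_adj m (3*k+2) j * v j) = v 0 + v(3*k+3)"
  unfolding split_sum rose_adj_def by (simp only: E if_True if_False) (simp add: sum.distrib if_distrib[where f="\<lambda>x. x * _"] sum.If_cases)
lemma R3: "k<m \<Longrightarrow> (\<Sum>j\<in>{0..3*m}. rose_adj m (3*k+3) j * v j) = v(3*k+1) + v(3*k+2)"
  unfolding split_sum rose_adj_def by (simp only: E if_True if_False) (simp add: sum.distrib if_distrib[where f="\<lambda>x. x * _"] sum.If_cases)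
lemma petal:
  assumes eq: "\<forall>i\<in>{0..3*m}. (\<Sum>j\<in>{0..3*m}. rose_adj m i j * v j) = l * v i" and k: "k<m"
  and l: "l \<noteq> 0"
  shows "v(3*k+2) = v(3*k+1)" "l*v(3*k+3) = 2*v(3*k+1)" "(l^2-2)*v(3*k+1) = l*v 0"
proof -
  have a: "l*v(3*k+1) = v 0 + v(3*k+3)" using eq[rule_format, of "3*k+1"] R1[OF k, of v] k by simp
  have b: "l*v(3*k+2) = v 0 + v(3*k+3)" using eq[rule_format, of "3*k+2"] R2[OF k, of v] k by simp
  have c: "l*v(3*k+3) = v(3*k+1) + v(3*k+2)" using eq[rule_format, of "3*k+3"] R3[OF k, of v] k by simp
  show 1: "v(3*k+2) = v(3*k+1)" using a b l by (metis mult_left_cancel)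
  show 2: "l*v(3*k+3) = 2*v(3*k+1)" using c 1 by simp
  have "l*(l*v(3*k+1)) = l*v 0 + 2*v(3*k+1)" using a 2 by (simp add: algebra_simps)
  then show "(l^2-2)*v(3*k+1) = l*v 0" by (simp add: algebra_simps power2_eq_square)
qed

lemma hub:
  assumes eq: "\<forall>i\<in>{0..3*m}. (\<Sum>j\<in>{0..3*m}. rose_adj m i j * v j) = l * v i"
  shows "l * v 0 = (\<Sum>k<m. v(3*k+1) + v(3*k+2))"
  using eq[rule_format, of 0] R0[of m v] by simp

lemma solved:
  assumes eq: "\<forall>i\<in>{0..3*m}. (\<Sum>j\<in>{0..3*m}. rose_adj m i j * v j) = l * v i" and k: "k<m"
  and l: "l \<noteq> 0" and l2: "l^2 = 2*real m + 2" and m: "m > 0"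
  shows "v(3*k+1) = l * v 0 / (2*real m)" "v(3*k+2) = l * v 0 / (2*real m)" "v(3*k+3) = v 0 / real m"
proof -
  note p = petal[OF eq k l]
  have "(2*real m) * v(3*k+1) = l*v 0" using p(3) l2 by simp
  then show 1: "v(3*k+1) = l * v 0 / (2*real m)" using m by (simp add: field_simps)
  then show "v(3*k+2) = l * v 0 / (2*real m)" using p(1) by simp
  have "l*v(3*k+3) = l * (v 0 / real m)" using p(2) 1 m by (simp add: field_simps)
  then show "v(3*k+3) = v 0 / real m" using l by (metis mult_left_cancel)
qed
lemma alg: fixes M l x y :: real assumes "M>0" "l^2 = 2*M+2"
  shows "x*y + M*(2*((l*x/(2*M))*(l*y/(2*M))) + (x/M)*(y/M)) = x*y*((2*M+2)/M)"
proof -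
  have "(l*x/(2*M))*(l*y/(2*M)) = l^2*x*y/(4*M*M)" by (simp add: power2_eq_square algebra_simps)
  also have "\<dots> = (2*M+2)*x*y/(4*M*M)" using assms by simp
  finally have e: "(l*x/(2*M))*(l*y/(2*M)) = (2*M+2)*x*y/(4*M*M)" .
  show ?thesis unfolding e using assms(1) by (simp add: field_simps)
qed

theorem theorem5:
  fixes m :: nat and lam1 :: real and \<psi> \<pi> :: "nat \<Rightarrow> real"
  assumes "m \<ge> 2"
    and "is_arg_max id (\<lambda>x. x \<in> eigenvalues (rose_nodes m) (rose_adj m)) lam1"
    and "is_eigvec (rose_nodes m) (rose_adj m) lam1 \<psi>"
    and "\<forall>i\<in>rose_nodes m. \<psi> i > 0"
    and "(\<Sum>i\<in>rose_nodes m. (\<psi> i)\<^sup>2) = 1"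
    and "is_stationary (rose_nodes m) (merw_P (rose_adj m) lam1 \<psi>) \<pi>"
  shows "(let N = real (3*m+1) in
            \<pi> rose_hub = real m / (2*real m + 2) \<and>
            \<pi> rose_hub = (N - 1) / (2*(N - 1) + 6) \<and>
            (\<forall>i. rose_internal m i \<longrightarrow>
                 \<pi> i = 1 / (4*real m) \<and> \<pi> i = 3 / (4*(N - 1))) \<and>
            (\<forall>i. rose_peripheral m i \<longrightarrow>
                 \<pi> i = 1 / (2*real m*(real m + 1)) \<and>
                 \<pi> i = 9 / (2*(N + 2)*(N - 1))))"
proof -
  define V where "V = {0..3*m}"
  define l where "l = lam1"
  have m0: "m > 0" "real m > 0" using assms(1) by auto
  have eqp: "\<forall>i\<in>V. (\<Sum>j\<in>V. rose_adj m i j * \<psi> j) = l * \<psi> i"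
    using assms(3) unfolding is_eigvec_def rose_nodes_def V_def l_def by blast
  have pos: "\<And>i. i \<in> V \<Longrightarrow> \<psi> i > 0" using assms(4) unfolding rose_nodes_def V_def by blast
  have inV: "\<And>k. k < m \<Longrightarrow> 3*k+1 \<in> V \<and> 3*k+2 \<in> V \<and> 3*k+3 \<in> V" "0 \<in> V"
    unfolding V_def by auto
  have "(\<Sum>k<m. \<psi>(3*k+1) + \<psi>(3*k+2)) > 0"
    using m0 inV pos by (intro sum_pos) (auto intro: add_pos_pos)
  then have "l * \<psi> 0 > 0" using hub[OF eqp[unfolded V_def]] by simp
  then have lpos: "l > 0" using pos[OF inV(2)] by (simp add: zero_less_mult_iff)
  have p0: "(l^2-2)*\<psi>(3*0+1) = l*\<psi> 0" using petal[OF eqp[unfolded V_def], of 0] m0 lpos by simp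
  have "l^2-2 \<noteq> 0" using p0 lpos pos[OF inV(2)] by auto
  then have ps1: "\<And>k. k<m \<Longrightarrow> \<psi>(3*k+1) = l*\<psi> 0/(l^2-2)"
    using petal(3)[OF eqp[unfolded V_def]] lpos by (simp add: field_simps)
  have ps2: "\<And>k. k<m \<Longrightarrow> \<psi>(3*k+2) = l*\<psi> 0/(l^2-2)"
    using petal(1)[OF eqp[unfolded V_def]] ps1 lpos by simp
  have "(\<Sum>k<m. \<psi>(3*k+1) + \<psi>(3*k+2)) = (\<Sum>k<m. 2*(l*\<psi> 0/(l^2-2)))"
  proof (rule sum.cong)
    fix k assume "k \<in> {..<m}"
    then have k: "k < m" by simp
    show "\<psi>(3*k+1) + \<psi>(3*k+2) = 2*(l*\<psi> 0/(l^2-2))" unfolding ps1[OF k] ps2[OF k] by simp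
  qed simp
  then have "l * \<psi> 0 = (\<Sum>k<m. 2*(l*\<psi> 0/(l^2-2)))"
    using hub[OF eqp[unfolded V_def]] by simp
  then have "l * \<psi> 0 = real m * (2*(l*\<psi> 0/(l^2-2)))" by simp
  then have "(l^2-2) = 2 * real m" using \<open>l^2-2 \<noteq> 0\<close> \<open>l * \<psi> 0 > 0\<close>
  proof -
    define a where "a = l * \<psi> 0"
    define c where "c = l^2 - 2"
    have "a = real m * (2 * (a / c))" using \<open>l * \<psi> 0 = real m * (2*(l*\<psi> 0/(l^2-2)))\<close> unfolding a_def c_def .
    then have "a * c = (2 * real m) * a" using \<open>l^2-2 \<noteq> 0\<close> unfolding c_def[symmetric] by (simp add: field_simps)
    then have "c = 2 * real m" using \<open>l * \<psi> 0 > 0\<close> unfolding a_def[symmetric] by (simp add: mult.commute)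
    then show ?thesis unfolding c_def .
  qed
  then have l2: "l^2 = 2*real m + 2" by simp
  define u where "u i = \<pi> i / \<psi> i" for i
  have piu: "\<And>i. i \<in> V \<Longrightarrow> \<pi> i = u i * \<psi> i" unfolding u_def using pos
    by (metis divide_eq_eq less_irrefl)
  have equ: "\<forall>j\<in>V. (\<Sum>i\<in>V. rose_adj m j i * u i) = l * u j"
  proof
    fix j assume j: "j \<in> V"
    have "(\<Sum>i\<in>V. \<pi> i * merw_P (rose_adj m) lam1 \<psi> i j) = \<pi> j"
      using assms(6) j unfolding is_stationary_def rose_nodes_def V_def by blast
    moreover have "\<pi> i * merw_P (rose_adj m) lam1 \<psi> i j = (rose_adj m j i * u i) * (\<psi> j / l)" if i: "i \<in> V" for i
    proof -
      have "rose_adj m i j = rose_adj m j i" unfolding rose_adj_def using esym by metis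
      moreover have "\<pi> i = u i * \<psi> i" using piu i .
      ultimately show ?thesis unfolding merw_P_def l_def using pos[OF i] by simp
    qed
    ultimately have "(\<Sum>i\<in>V. (rose_adj m j i * u i) * (\<psi> j / l)) = u j * \<psi> j"
      using piu[OF j] by (metis (no_types, lifting) sum.cong)
    then have "(\<Sum>i\<in>V. rose_adj m j i * u i) * (\<psi> j / l) = u j * \<psi> j"
      by (simp only: sum_distrib_right)
    then show "(\<Sum>i\<in>V. rose_adj m j i * u i) = l * u j" using pos[OF j] lpos
      by (simp add: field_simps)
  qed
  note sp = solved[OF eqp[unfolded V_def] _ lpos[THEN less_imp_neq, symmetric] l2 m0(1)]
  note su = solved[OF equ[unfolded V_def] _ lpos[THEN less_imp_neq, symmetric] l2 m0(1)]
  have gsum: "(\<Sum>i\<in>V. f i * g i) = f 0 * g 0 + real m * (2*((l*f 0/(2*real m))*(l*g 0/(2*real m))) + (f 0/real m)*(g 0/real m))"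
    if f: "\<And>k. k<m \<Longrightarrow> f(3*k+1) = l*f 0/(2*real m) \<and> f(3*k+2) = l*f 0/(2*real m) \<and> f(3*k+3) = f 0/real m"
    and g: "\<And>k. k<m \<Longrightarrow> g(3*k+1) = l*g 0/(2*real m) \<and> g(3*k+2) = l*g 0/(2*real m) \<and> g(3*k+3) = g 0/real m"
    for f g :: "nat \<Rightarrow> real"
  proof -
    have "(\<Sum>k<m. f(3*k+1)*g(3*k+1) + f(3*k+2)*g(3*k+2) + f(3*k+3)*g(3*k+3))
        = (\<Sum>k<m. 2*((l*f 0/(2*real m))*(l*g 0/(2*real m))) + (f 0/real m)*(g 0/real m))"
    proof (rule sum.cong)
      fix k assume "k \<in> {..<m}"
      then have k: "k < m" by simp
      show "f(3*k+1)*g(3*k+1) + f(3*k+2)*g(3*k+2) + f(3*k+3)*g(3*k+3) = 2*((l*f 0/(2*real m))*(l*g 0/(2*real m))) + (f 0/real m)*(g 0/real m)"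
        using f[OF k] g[OF k] by simp
    qed simp
    then show ?thesis unfolding V_def split_sum by simp
  qed
  have "1 = (\<Sum>i\<in>V. \<psi> i * \<psi> i)" using assms(5) unfolding V_def rose_nodes_def by (simp add: power2_eq_square)
  also have "\<dots> = \<psi> 0 * \<psi> 0 * ((2*real m+2)/real m)"
    by (subst gsum; (rule alg[OF m0(2) l2])?; use sp in blast)
  finally have S1: "\<psi> 0 * \<psi> 0 * ((2*real m + 2)/real m) = 1" by simp
  have "1 = (\<Sum>i\<in>V. \<pi> i)" using assms(6) unfolding is_stationary_def V_def rose_nodes_def by simp
  also have "\<dots> = (\<Sum>i\<in>V. u i * \<psi> i)" using piu by simp
  also have "\<dots> = u 0 * \<psi> 0 * ((2*real m+2)/real m)"
    by (subst gsum; (rule alg[OF m0(2) l2])?; use sp su in blast)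
  finally have S2: "u 0 * \<psi> 0 * ((2*real m + 2)/real m) = 1" by simp
  have ps0: "\<psi> 0 * \<psi> 0 = real m / (2*real m + 2)" using S1 m0 by (simp add: field_simps)
  have K: "(2*real m + 2)/real m \<noteq> 0" using m0 by simp
  have "u 0 * \<psi> 0 * ((2*real m + 2)/real m) = \<psi> 0 * \<psi> 0 * ((2*real m + 2)/real m)"
    by (simp only: S1 S2)
  then have "u 0 * \<psi> 0 = \<psi> 0 * \<psi> 0" using K mult_right_cancel by blast
  then have u0: "u 0 = \<psi> 0" using pos[OF inV(2)] by simp
  have pi0: "\<pi> 0 = real m / (2*real m + 2)" using piu[OF inV(2)] u0 ps0 by simp
  have piI: "\<pi> i = 1 / (4*real m)" if ri: "rose_internal m i" for i
  proof -
    obtain k where k: "k<m" "i = 3*k+1 \<or> i = 3*k+2" using ri unfolding rose_internal_def by blast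
    have "\<pi> i = (l*\<psi> 0/(2*real m))*(l*\<psi> 0/(2*real m))" using k piu inV(1)[OF k(1)] sp[OF k(1)] su[OF k(1)] u0
      by auto
    also have "\<dots> = l^2 * (\<psi> 0 * \<psi> 0) / (4 * (real m * real m))" by (simp add: power2_eq_square algebra_simps)
    also have "\<dots> = real m / (4 * (real m * real m))" unfolding l2 ps0
      by (smt (verit) m0(2) nonzero_mult_div_cancel_left times_divide_eq_right)
    also have "\<dots> = 1 / (4*real m)" using m0 by simp
    finally show ?thesis .
  qed
  have piP: "\<pi> i = 1 / (2*real m*(real m + 1))" if rp: "rose_peripheral m i" for i
  proof -
    obtain k where k: "k<m" "i = 3*k+3" using rp unfolding rose_peripheral_def by blast
    have "\<pi> i = (\<psi> 0 * \<psi> 0) / (real m * real m)" using k piu inV(1)[OF k(1)] sp[OF k(1)] su[OF k(1)] u0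
      by auto
    also have "\<dots> = 1 / ((2*real m + 2) * real m)" unfolding ps0 using m0 by simp
    also have "\<dots> = 1 / (2*real m*(real m + 1))" by (simp add: algebra_simps)
    finally show ?thesis .
  qed
  have N1: "real (3*m+1) - 1 = 3 * real m" by simp
  have N2: "real (3*m+1) + 2 = 3 * (real m + 1)" by simp
  have c1: "real m / (2*real m + 2) = (3*real m) / (2*(3*real m) + 6)" by (simp add: field_simps)
  have c2: "1 / (4*real m) = 3 / (4*(3*real m))" by simp
  have c3: "1 / (2*real m*(real m + 1)) = 9 / (2*(3*(real m + 1))*(3*real m))"
  proof -
    have e9: "(2*(3*(real m + 1))*(3*real m)) = 9 * (2*real m*(real m + 1))" by (simp add: algebra_simps)
    show ?thesis by (subst e9) simp
  qed
  show ?thesis unfolding Let_def rose_hub_def N1 N2 using pi0 piI piP c1 c2 c3 by metis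
qed
end
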